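(* Let $B=XCX^T$ where $X$ is a real non-singular $n\times n$ matrix and $C$ is a real symmetric $n\times n$ matrix, and let $\Pi$ be the orthogonal projection onto the column space of $B$. Then \[ B^{+}=\Pi X^{-T}C^{+}X^{-1}\Pi. \]
   Context: $M^{+}$ denotes the Moore–Penrose pseudo-inverse of $M$, and $X^{-T}=(X^{-1})^T$. *)

theory Defs
  imports "HOL-Analysis.Analysis"
begin

definition is_mp_inverse :: "real^'n^'m \<Rightarrow> real^'m^'n \<Rightarrow> bool" where
  "is_mp_inverse M G \<longleftrightarrow>
     M ** G ** M = M \<and> G ** M ** G = G \<and>
     transpose (M ** G) = M ** G \<and> transpose (G ** M) = G ** M"

definition mp_pinv :: "real^'n^'m \<Rightarrow> real^'m^'n" where
  "mp_pinv M = (THE G. is_mp_inverse M G)"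

definition col_space :: "real^'n^'m \<Rightarrow> (real^'m) set" where
  "col_space M = range (\<lambda>x. M *v x)"

definition orth_proj_matrix :: "(real^'n) set \<Rightarrow> real^'n^'n" where
  "orth_proj_matrix S = (THE P. \<forall>x. P *v x \<in> S \<and> (\<forall>y\<in>S. (x - P *v x) \<bullet> y = 0))"

end

theory Submission
  imports Defs
begin

definition prj :: "(real^'n) set \<Rightarrow> real^'n^'n \<Rightarrow> bool" where
  "prj S P \<longleftrightarrow> (\<forall>x. P *v x \<in> S \<and> (\<forall>y\<in>S. (x - P *v x) \<bullet> y = 0))"

lemma mat_works_real: "linear (f::real^'n \<Rightarrow> real^'m) \<Longrightarrow> matrix f *v x = f x"
  by (simp add: matrix_works linear_matrix_vector_mul_eq)

lemma transpose_inner: "(transpose A *v x) \<bullet> y = x \<bullet> ((A::real^'n^'m) *v y)"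
  by (metis dot_lmul_matrix transpose_matrix_vector)

lemma proj_vec_unique:
  fixes S :: "(real^'n) set"
  assumes "subspace S" "y1 \<in> S" "y2 \<in> S"
    "\<forall>w\<in>S. (x - y1) \<bullet> w = 0" "\<forall>w\<in>S. (x - y2) \<bullet> w = 0"
  shows "y1 = y2"
proof -
  have d: "y1 - y2 \<in> S" using assms by (simp add: subspace_diff)
  have "(y1 - y2) \<bullet> (y1 - y2) = (x - y2) \<bullet> (y1 - y2) - (x - y1) \<bullet> (y1 - y2)"
    by (simp add: inner_diff_left)
  also have "\<dots> = 0" using assms d by simp
  finally show ?thesis by simp
qed

lemma proj_exists:
  fixes S :: "(real^'n) set"
  assumes S: "subspace S"
  shows "\<exists>P. prj S P"
proof -
  have ex: "\<exists>y. y \<in> S \<and> (\<forall>w\<in>S. (x - y) \<bullet> w = 0)" for x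
  proof -
    obtain y z where "y \<in> span S" "\<And>w. w \<in> span S \<Longrightarrow> orthogonal z w" "x = y + z"
      using orthogonal_subspace_decomp_exists by blast
    then show ?thesis using S span_eq_iff span_superset
      by (metis add_diff_cancel_left' orthogonal_def)
  qed
  define p where "p x = (SOME y. y \<in> S \<and> (\<forall>w\<in>S. (x - y) \<bullet> w = 0))" for x
  have p: "p x \<in> S \<and> (\<forall>w\<in>S. (x - p x) \<bullet> w = 0)" for x
    unfolding p_def using someI_ex[OF ex] by blast
  have lin: "linear p"
  proof
    fix a b
    have "(a + b - (p a + p b)) \<bullet> w = (a - p a) \<bullet> w + (b - p b) \<bullet> w" for w
      by (simp add: inner_diff_left inner_add_left)
    then have "\<forall>w\<in>S. (a + b - (p a + p b)) \<bullet> w = 0" using p by simp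
    moreover have "p a + p b \<in> S" using p S by (simp add: subspace_add)
    ultimately show "p (a + b) = p a + p b"
      using proj_vec_unique[OF S] p by blast
  next
    fix c :: real and a
    have "c *\<^sub>R a - c *\<^sub>R p a = c *\<^sub>R (a - p a)" by (simp add: scaleR_diff_right)
    then have "\<forall>w\<in>S. (c *\<^sub>R a - c *\<^sub>R p a) \<bullet> w = 0" using p by simp
    moreover have "c *\<^sub>R p a \<in> S" using p S by (simp add: subspace_scale)
    ultimately show "p (c *\<^sub>R a) = c *\<^sub>R p a"
      using proj_vec_unique[OF S] p by blast
  qed
  have "prj S (matrix p)" unfolding prj_def using p mat_works_real[OF lin] by simp
  then show ?thesis by blast
qed

lemma prj_unique:
  assumes S: "subspace S" and "prj S P1" "prj S P2"
  shows "P1 = P2"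
  unfolding matrix_eq using assms proj_vec_unique[OF S] unfolding prj_def by blast

lemma prj_orth:
  assumes S: "subspace S"
  shows "prj S (orth_proj_matrix S)"
proof -
  obtain P where "prj S P" using proj_exists[OF S] by blast
  then have "\<exists>!P. prj S P" using prj_unique[OF S] by blast
  then show ?thesis unfolding orth_proj_matrix_def prj_def[symmetric]
    by (rule theI')
qed

lemma prj_id: "subspace S \<Longrightarrow> prj S P \<Longrightarrow> x \<in> S \<Longrightarrow> P *v x = x"
  using proj_vec_unique[of S "P *v x" x x] unfolding prj_def by simp

lemma prj_zero: "subspace S \<Longrightarrow> prj S P \<Longrightarrow> \<forall>y\<in>S. v \<bullet> y = 0 \<Longrightarrow> P *v v = 0"
  using proj_vec_unique[of S "P *v v" 0 v] unfolding prj_def by (simp add: subspace_0)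

lemma prj_sym:
  assumes S: "subspace S" and P: "prj S P"
  shows "transpose P = P"
proof -
  have sy: "(P *v x) \<bullet> y = (P *v x) \<bullet> (P *v y)" for x y
  proof -
    have "(P *v x) \<bullet> y = (P *v x) \<bullet> (P *v y) + (y - P *v y) \<bullet> (P *v x)"
      by (simp add: inner_diff inner_commute)
    then show ?thesis using P unfolding prj_def by simp
  qed
  have h: "(transpose P *v y) \<bullet> x = (P *v y) \<bullet> x" for x y
  proof -
    have "(transpose P *v y) \<bullet> x = y \<bullet> (P *v x)" by (rule transpose_inner)
    also have "\<dots> = (P *v y) \<bullet> x" using sy[of x y] sy[of y x] by (simp add: inner_commute)
    finally show ?thesis .
  qed
  have "transpose P *v y = P *v y" for y
  proof -
    have "(transpose P *v y - P *v y) \<bullet> (transpose P *v y - P *v y) = 0"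
      by (simp only: inner_diff_left h)
    then show ?thesis by simp
  qed
  then show ?thesis by (simp add: matrix_eq)
qed

lemma prj_idem:
  assumes S: "subspace S" and P: "prj S P"
  shows "P ** P = P"
  unfolding matrix_eq matrix_vector_mul_assoc[symmetric]
  using prj_id[OF S P] P unfolding prj_def by blast

lemma mp_unique:
  assumes A: "is_mp_inverse M G1" and B: "is_mp_inverse M G2"
  shows "G1 = G2"
proof -
  have a1: "M ** G1 ** M = M" "G1 ** M ** G1 = G1" "transpose (M ** G1) = M ** G1"
      "transpose (G1 ** M) = G1 ** M" using A unfolding is_mp_inverse_def by auto
  have b1: "M ** G2 ** M = M" "G2 ** M ** G2 = G2" "transpose (M ** G2) = M ** G2"
      "transpose (G2 ** M) = G2 ** M" using B unfolding is_mp_inverse_def by auto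
  have tM1: "transpose M = transpose M ** (M ** G2)"
    by (metis b1(1) b1(3) matrix_transpose_mul)
  have e1: "transpose G1 ** transpose M = M ** G2"
  proof -
    have "transpose G1 ** transpose M = transpose G1 ** transpose M ** (M ** G2)"
      by (metis tM1 matrix_mul_assoc)
    also have "\<dots> = M ** G1 ** (M ** G2)" by (metis a1(3) matrix_transpose_mul)
    also have "\<dots> = M ** G2" by (metis a1(1) matrix_mul_assoc)
    finally show ?thesis .
  qed
  have g1: "G1 = G1 ** M ** G2"
  proof -
    have "G1 = G1 ** (M ** G1)" by (metis a1(2) matrix_mul_assoc)
    also have "\<dots> = G1 ** (transpose G1 ** transpose M)" by (metis a1(3) matrix_transpose_mul)
    also have "\<dots> = G1 ** M ** G2" by (simp add: e1 matrix_mul_assoc)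
    finally show ?thesis .
  qed
  have tM2: "transpose M = (G1 ** M) ** transpose M"
    by (metis a1(1) a1(4) matrix_mul_assoc matrix_transpose_mul)
  have e2: "transpose M ** transpose G2 = G1 ** M"
  proof -
    have "transpose M ** transpose G2 = (G1 ** M) ** (transpose M ** transpose G2)"
      by (metis tM2 matrix_mul_assoc)
    also have "\<dots> = (G1 ** M) ** (G2 ** M)" by (metis b1(4) matrix_transpose_mul)
    also have "\<dots> = G1 ** M" by (metis b1(1) matrix_mul_assoc)
    finally show ?thesis .
  qed
  have g2: "G2 = G1 ** M ** G2"
  proof -
    have "G2 = (G2 ** M) ** G2" by (metis b1(2))
    also have "\<dots> = (transpose M ** transpose G2) ** G2" by (metis b1(4) matrix_transpose_mul)
    also have "\<dots> = G1 ** M ** G2" by (simp add: e2)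
    finally show ?thesis .
  qed
  show ?thesis using g1 g2 by simp
qed

lemma mp_exists:
  fixes M :: "real^'n^'m"
  shows "\<exists>G. is_mp_inverse M G"
proof -
  define Q where "Q = range ((*v) M)"
  define R where "R = range ((*v) (transpose M))"
  have sQ: "subspace Q" unfolding Q_def
    by (rule linear_subspace_image) auto
  have sR: "subspace R" unfolding R_def
    by (rule linear_subspace_image) auto
  obtain PQ where PQ: "prj Q PQ" using proj_exists[OF sQ] by blast
  obtain PR where PR: "prj R PR" using proj_exists[OF sR] by blast
  have Mz: "M *v z = 0" if "\<forall>y\<in>R. z \<bullet> y = 0" for z
  proof -
    have "(M *v z) \<bullet> (M *v z) = z \<bullet> (transpose M *v (M *v z))"
      by (metis transpose_inner transpose_transpose inner_commute)
    also have "\<dots> = 0" using that unfolding R_def by simp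
    finally show ?thesis by simp
  qed
  have K0: "M *v x = M *v (PR *v x)" for x
  proof -
    have "M *v (x - PR *v x) = 0" using Mz PR unfolding prj_def by blast
    then show ?thesis by (simp add: matrix_vector_mult_diff_distrib)
  qed
  have inj: "inj_on ((*v) M) R"
  proof (rule inj_onI)
    fix a b assume ab: "a \<in> R" "b \<in> R" "M *v a = M *v b"
    have "a - b \<in> R" using ab sR by (simp add: subspace_diff)
    then obtain u where u: "a - b = transpose M *v u" unfolding R_def by blast
    have "(a - b) \<bullet> (a - b) = u \<bullet> (M *v (a - b))" by (metis u transpose_inner)
    also have "\<dots> = 0" using ab by (simp add: matrix_vector_mult_diff_distrib)
    finally show "a = b" by simp
  qed
  obtain g where g: "range g \<subseteq> R" "linear g" "\<forall>v\<in>R. g (M *v v) = v"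
    using linear_exists_left_inverse_on[OF _ sR inj] by auto
  have K2: "g (M *v x) = PR *v x" for x
  proof -
    have "PR *v x \<in> R" using PR unfolding prj_def by blast
    then have "g (M *v (PR *v x)) = PR *v x" using g(3) by blast
    then show ?thesis using K0[of x] by simp
  qed
  have K1: "M *v g q = q" if hq: "q \<in> Q" for q
  proof -
    obtain w where "q = M *v w" using hq unfolding Q_def by auto
    then show ?thesis by (simp add: K2 K0[symmetric])
  qed
  define G where "G = matrix (\<lambda>y. g (PQ *v y))"
  have lin: "linear (\<lambda>y. g (PQ *v y))"
    using linear_compose[of "(*v) PQ" g] g(2) by (simp add: o_def)
  have Gv: "G *v y = g (PQ *v y)" for y unfolding G_def using mat_works_real[OF lin] .
  have MQ: "PQ *v (M *v x) = M *v x" for x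
    using prj_id[OF sQ PQ] unfolding Q_def by blast
  have MG: "M ** G = PQ"
    unfolding matrix_eq matrix_vector_mul_assoc[symmetric] Gv
    using K1 PQ unfolding prj_def by blast
  have GM: "G ** M = PR"
    unfolding matrix_eq matrix_vector_mul_assoc[symmetric] Gv MQ K2 by simp
  have "M ** G ** M = M"
    unfolding MG matrix_eq matrix_vector_mul_assoc[symmetric] MQ by simp
  moreover have "G ** M ** G = G"
    unfolding GM matrix_eq matrix_vector_mul_assoc[symmetric] Gv
  proof
    fix x
    have "PR *v g (PQ *v x) = g (PQ *v x)" using prj_id[OF sR PR] g(1) by blast
    then show "PR *v g (PQ *v x) = g (PQ *v x)" .
  qed
  ultimately have "is_mp_inverse M G"
    unfolding is_mp_inverse_def MG GM using prj_sym[OF sQ PQ] prj_sym[OF sR PR]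
    by (metis matrix_mul_assoc)
  then show ?thesis by blast
qed

lemma mp_pinv_is: "is_mp_inverse M (mp_pinv M)"
proof -
  obtain G where "is_mp_inverse M G" using mp_exists by blast
  then have "\<exists>!G. is_mp_inverse M G" using mp_unique by blast
  then show ?thesis unfolding mp_pinv_def by (rule theI')
qed

lemma mp_transpose:
  assumes "is_mp_inverse M G"
  shows "is_mp_inverse (transpose M) (transpose G)"
  using assms unfolding is_mp_inverse_def
  by (metis matrix_transpose_mul matrix_mul_assoc transpose_transpose)


theorem mainTheorem18:
  fixes X C :: "real^'n^'n"
  assumes "invertible X"
    and "transpose C = C"
  shows "mp_pinv (X ** C ** transpose X) =
           orth_proj_matrix (col_space (X ** C ** transpose X))
           ** transpose (matrix_inv X) ** mp_pinv C ** matrix_inv X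
           ** orth_proj_matrix (col_space (X ** C ** transpose X))"
proof -
  define B where "B = X ** C ** transpose X"
  define S where "S = col_space B"
  define P where "P = orth_proj_matrix S"
  define Xi where "Xi = matrix_inv X"
  define Cp where "Cp = mp_pinv C"
  define G where "G = P ** transpose Xi ** Cp ** Xi ** P"
  have XXi: "X ** Xi = mat 1" "Xi ** X = mat 1"
    using assms(1) someI_ex[of "\<lambda>A'. X ** A' = mat 1 \<and> A' ** X = mat 1"]
    unfolding Xi_def matrix_inv_def invertible_def by auto
  have XXiT: "transpose X ** transpose Xi = mat 1" "transpose Xi ** transpose X = mat 1"
    using XXi by (metis matrix_transpose_mul transpose_mat)+
  have sS: "subspace S" unfolding S_def col_space_def
    by (rule linear_subspace_image) auto
  have PS: "prj S P" unfolding P_def using prj_orth[OF sS] .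
  have PT: "transpose P = P" using prj_sym[OF sS PS] .
  have PP: "P ** P = P" using prj_idem[OF sS PS] .
  have BT: "transpose B = B" unfolding B_def
    by (simp add: matrix_transpose_mul assms(2) matrix_mul_assoc)
  have PB: "P ** B = B"
    unfolding matrix_eq matrix_vector_mul_assoc[symmetric]
    using prj_id[OF sS PS] unfolding S_def col_space_def by blast
  have BP: "B ** P = B" by (metis PB PT BT matrix_transpose_mul)
  have mpC: "is_mp_inverse C Cp" unfolding Cp_def by (rule mp_pinv_is)
  have CpT: "transpose Cp = Cp"
    using mp_unique[OF mp_transpose[OF mpC]] mpC assms(2) by simp
  have CCpC: "C ** Cp ** C = C" using mpC unfolding is_mp_inverse_def by simp
  have BXi: "B ** transpose Xi = X ** C"
    unfolding B_def by (metis XXiT(1) matrix_mul_assoc matrix_mul_rid)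
  have XiB: "Xi ** B = C ** transpose X"
    unfolding B_def by (metis XXi(2) matrix_mul_assoc matrix_mul_lid)
  have BGB: "B ** G ** B = B"
  proof -
    have "B ** G ** B = (B ** P) ** transpose Xi ** Cp ** Xi ** (P ** B)"
      unfolding G_def by (simp add: matrix_mul_assoc)
    also have "\<dots> = (B ** transpose Xi) ** Cp ** (Xi ** B)"
      by (simp add: BP PB matrix_mul_assoc)
    also have "\<dots> = X ** (C ** Cp ** C) ** transpose X"
      by (simp add: BXi XiB matrix_mul_assoc)
    also have "\<dots> = B" by (simp add: CCpC B_def)
    finally show ?thesis .
  qed
  have GP: "G ** P = G" unfolding G_def by (metis PP matrix_mul_assoc)
  have PG: "P ** G = G" unfolding G_def by (metis PP matrix_mul_assoc)
  have GT: "transpose G = G"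
    unfolding G_def by (simp add: matrix_transpose_mul PT CpT matrix_mul_assoc)
  have BG: "B ** G = P"
    unfolding matrix_eq
  proof
    fix x
    have "P *v x \<in> S" using PS unfolding prj_def by blast
    then obtain w where w: "P *v x = B *v w" unfolding S_def col_space_def by auto
    have h1: "(B ** G) *v (P *v x) = P *v x"
      unfolding w matrix_vector_mul_assoc BGB ..
    have "P *v (x - P *v x) = 0"
      using prj_zero[OF sS PS] PS unfolding prj_def by blast
    then have h2: "(B ** G) *v (x - P *v x) = 0"
      by (metis GP matrix_mul_assoc matrix_vector_mul_assoc matrix_vector_mult_0_right)
    have "(B ** G) *v x = (B ** G) *v (P *v x) + (B ** G) *v (x - P *v x)"
      by (simp add: matrix_vector_mult_diff_distrib)
    then show "(B ** G) *v x = P *v x" using h1 h2 by simp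
  qed
  have GB: "G ** B = P"
    by (metis BG BT GT PT matrix_transpose_mul)
  have "is_mp_inverse B G"
    unfolding is_mp_inverse_def
    by (simp add: BGB BG GB PT GP PB PG flip: matrix_mul_assoc)
  then have "mp_pinv B = G"
    using mp_unique mp_pinv_is by blast
  then show ?thesis unfolding G_def P_def S_def Xi_def Cp_def B_def .
qed

end
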